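(* Let $B_m\in\mathbb{C}^{m\times m}$, let $\lambda_1,\ldots,\lambda_{m+1}\in\mathbb{C}$, let $P(\lambda)=\prod_{i=1}^{m+1}(\lambda-\lambda_i)$ and $\delta=\sum_{i=1}^{m+1}\lambda_i-\operatorname{tr}(B_m)$. For $b,c\in\mathbb{C}^m$ write $B_{m+1}(b,c)=\begin{pmatrix}B_m&c\\ b^{T}&\delta\end{pmatrix}$. Suppose $b,c\in\mathbb{C}^m$ satisfy $\det(\lambda I_{m+1}-B_{m+1}(b,c))=P(\lambda)$. Then: (i) $c$ is the unique $c'\in\mathbb{C}^m$ with $\det(\lambda I_{m+1}-B_{m+1}(b,c'))=P(\lambda)$ if and only if the pair $(B_m, b^T)$ is observable, i.e. $\operatorname{rank}(b,\,B_m^{T}b,\,(B_m^{T})^2b,\ldots)=m$; (ii) $b$ is the unique $b'\in\mathbb{C}^m$ with $\det(\lambda I_{m+1}-B_{m+1}(b',c))=P(\lambda)$ if and only if the pair $(B_m,c)$ is controllable, i.e. $\operatorname{rank}(c,\,B_mc,\,B_m^2c,\ldots)=m$. *)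

theory Defs
  imports "Jordan_Normal_Form.Char_Poly" "Jordan_Normal_Form.DL_Rank"
begin

definition bordered_mat :: "complex mat \<Rightarrow> complex vec \<Rightarrow> complex vec \<Rightarrow> complex \<Rightarrow> complex mat" where
  "bordered_mat B b c d =
     four_block_mat B (mat_of_cols (dim_row B) [c]) (mat_of_rows (dim_col B) [b]) (mat 1 1 (\<lambda>_. d))"

definition mat_trace :: "complex mat \<Rightarrow> complex" where
  "mat_trace A = (\<Sum>i<dim_row A. A $$ (i,i))"

definition krylov_mat :: "complex mat \<Rightarrow> complex vec \<Rightarrow> complex mat" where
  "krylov_mat B c = mat_of_cols (dim_row B) (map (\<lambda>k. (B ^\<^sub>m k) *\<^sub>v c) [0..<dim_row B])"

definition controllable :: "complex mat \<Rightarrow> complex vec \<Rightarrow> bool" where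
  "controllable B c \<longleftrightarrow> vec_space.rank (dim_row B) (krylov_mat B c) = dim_row B"

definition observable :: "complex mat \<Rightarrow> complex vec \<Rightarrow> bool" where
  "observable B b \<longleftrightarrow> vec_space.rank (dim_row B) (krylov_mat (transpose_mat B) b) = dim_row B"

end

theory Submission
  imports Defs
begin
lemma bordered_carrier:
  assumes B: "B \<in> carrier_mat m m" and b: "b \<in> carrier_vec m" and c: "c \<in> carrier_vec m"
  shows "bordered_mat B b c d \<in> carrier_mat (Suc m) (Suc m)"
  using B unfolding bordered_mat_def by auto

lemma bordered_index:
  assumes B: "B \<in> carrier_mat m m" and b: "b \<in> carrier_vec m" and c: "c \<in> carrier_vec m"
    and i: "i < Suc m" and j: "j < Suc m"
  shows "bordered_mat B b c d $$ (i,j) = (if i < m then if j < m then B $$ (i,j) else c $ i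
      else if j < m then b $ j else d)"
  using B b c i j unfolding bordered_mat_def
  by (auto simp: mat_of_cols_index mat_of_rows_index)

lemma pow_mat_Suc': assumes A: "A \<in> carrier_mat n n" shows "A ^\<^sub>m Suc k = A * A ^\<^sub>m k"
proof (induction k)
  case 0 then show ?case using A by simp
next
  case (Suc k)
  have "A ^\<^sub>m Suc (Suc k) = (A * A ^\<^sub>m k) * A" using Suc by simp
  also have "\<dots> = A * (A ^\<^sub>m k * A)" using A by (simp add: assoc_mult_mat[of _ n n _ n _ n])
  finally show ?case by simp
qed

lemma transpose_pow: fixes A :: "'a :: comm_semiring_1 mat" assumes A: "A \<in> carrier_mat n n"
  shows "transpose_mat (A ^\<^sub>m k) = (transpose_mat A) ^\<^sub>m k"
proof (induction k)
  case 0 then show ?case using A by simp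
next
  case (Suc k)
  have "transpose_mat (A ^\<^sub>m Suc k) = transpose_mat A * transpose_mat (A ^\<^sub>m k)"
    using A by (simp add: transpose_mult[of "A ^\<^sub>m k" n n A n])
  also have "\<dots> = transpose_mat A ^\<^sub>m Suc k" using Suc pow_mat_Suc'[of "transpose_mat A" n k] A by simp
  finally show ?case .
qed

lemma vec_diff_zero: fixes c c' :: "complex vec" assumes e: "c - c' = 0\<^sub>v n" and c: "c \<in> carrier_vec n" and c': "c' \<in> carrier_vec n"
  shows "c' = c"
proof (rule eq_vecI)
  fix i assume i: "i < dim_vec c"
  have "(c - c') $ i = 0" using e i c by simp
  then show "c' $ i = c $ i" using i c c' by simp
qed (use c c' in simp)

definition bN :: "complex mat \<Rightarrow> complex vec \<Rightarrow> complex \<Rightarrow> complex vec \<Rightarrow> complex poly mat" where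
  "bN B b d v = char_poly_matrix (bordered_mat B b v d)"
definition uu :: "complex mat \<Rightarrow> complex vec \<Rightarrow> complex \<Rightarrow> nat \<Rightarrow> complex poly" where
  "uu B b d i = cofactor (bN B b d (0\<^sub>v (dim_row B))) i (dim_row B)"

context
  fixes B :: "complex mat" and b :: "complex vec" and d :: complex and m :: nat
  assumes B: "B \<in> carrier_mat m m" and b: "b \<in> carrier_vec m"
begin

lemma bN_carrier: "v \<in> carrier_vec m \<Longrightarrow> bN B b d v \<in> carrier_mat (Suc m) (Suc m)"
  unfolding bN_def using bordered_carrier[OF B b] by auto

lemma bN_index: assumes v: "v \<in> carrier_vec m" and i: "i < Suc m" and j: "j < Suc m"
  shows "bN B b d v $$ (i,j) = (if i = j then [:0,1:] else 0) + [:- bordered_mat B b v d $$ (i,j):]"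
proof -
  have "dim_row (bordered_mat B b v d) = Suc m" "dim_col (bordered_mat B b v d) = Suc m"
    using bordered_carrier[OF B b v, of d] by auto
  then show ?thesis using i j unfolding bN_def char_poly_matrix_def by auto
qed

lemma bN_delete: assumes v: "v \<in> carrier_vec m" and i: "i < Suc m"
  shows "mat_delete (bN B b d v) i m = mat_delete (bN B b d (0\<^sub>v m)) i m"
proof -
  have z: "0\<^sub>v m \<in> carrier_vec m" by simp
  show ?thesis
    using bN_carrier[OF v] bN_carrier[OF z] i
    by (intro eq_matI, auto simp: mat_delete_def bN_index[OF v] bN_index[OF z] bordered_index[OF B b v]
      bordered_index[OF B b z])
qed

lemma bN_delete_last: assumes v: "v \<in> carrier_vec m"
  shows "mat_delete (bN B b d v) m m = char_poly_matrix B"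
  using bN_carrier[OF v] B
  by (intro eq_matI, auto simp: mat_delete_def bN_index[OF v] bordered_index[OF B b v] char_poly_matrix_def)

lemma uu_cof: assumes v: "v \<in> carrier_vec m" and i: "i < Suc m"
  shows "cofactor (bN B b d v) i m = uu B b d i"
  unfolding uu_def cofactor_def using B bN_delete[OF v i] by simp

lemma laplace_bordered: assumes v: "v \<in> carrier_vec m"
  shows "char_poly (bordered_mat B b v d) = (\<Sum>i<m. [:- (v $ i):] * uu B b d i) + ([:0,1:] + [:-d:]) * char_poly B"
proof -
  have "char_poly (bordered_mat B b v d) = (\<Sum>i<Suc m. bN B b d v $$ (i,m) * cofactor (bN B b d v) i m)"
    unfolding char_poly_def bN_def[symmetric] by (rule laplace_expansion_column[OF bN_carrier[OF v]], simp)
  also have "\<dots> = (\<Sum>i<m. bN B b d v $$ (i,m) * cofactor (bN B b d v) i m) + bN B b d v $$ (m,m) * cofactor (bN B b d v) m m"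
    by simp
  also have "\<dots> = (\<Sum>i<m. [:- (v $ i):] * uu B b d i) + ([:0,1:] + [:-d:]) * char_poly B"
  proof -
    have "(\<Sum>i<m. bN B b d v $$ (i,m) * cofactor (bN B b d v) i m) = (\<Sum>i<m. [:- (v $ i):] * uu B b d i)"
      by (rule sum.cong, auto simp: bN_index[OF v] bordered_index[OF B b v] uu_cof[OF v])
    moreover have "cofactor (bN B b d v) m m = char_poly B"
      using bN_delete_last[OF v] by (simp add: cofactor_def char_poly_def)
    moreover have "bN B b d v $$ (m,m) = [:0,1:] + [:-d:]"
      by (simp add: bN_index[OF v] bordered_index[OF B b v])
    ultimately show ?thesis by simp
  qed
  finally show ?thesis .
qed

lemma adj_identity: assumes k: "k < m"
  shows "[:0,1:] * uu B b d k - (\<Sum>i<m. [:B $$ (i,k):] * uu B b d i) - [:b $ k:] * char_poly B = 0"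
proof -
  have z: "0\<^sub>v m \<in> carrier_vec m" by simp
  let ?N = "bN B b d (0\<^sub>v m)"
  have "(adj_mat ?N * ?N) $$ (m,k) = (det ?N \<cdot>\<^sub>m 1\<^sub>m (Suc m)) $$ (m,k)"
    using adj_mat(3)[OF bN_carrier[OF z]] by simp
  also have "\<dots> = 0" using k by simp
  finally have "(adj_mat ?N * ?N) $$ (m,k) = 0" .
  moreover have "(adj_mat ?N * ?N) $$ (m,k) = (\<Sum>i<Suc m. cofactor ?N i m * ?N $$ (i,k))"
    using bN_carrier[OF z] k
    by (auto simp: adj_mat_def scalar_prod_def lessThan_atLeast0 intro!: sum.cong)
  moreover have "\<dots> = (\<Sum>i<m. uu B b d i * ?N $$ (i,k)) + char_poly B * ?N $$ (m,k)"
  proof -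
    have "cofactor ?N m m = char_poly B"
      using bN_delete_last[OF z] by (simp add: cofactor_def char_poly_def)
    moreover have "(\<Sum>i<m. cofactor ?N i m * ?N $$ (i,k)) = (\<Sum>i<m. uu B b d i * ?N $$ (i,k))"
      by (rule sum.cong, auto simp: uu_cof[OF z])
    ultimately show ?thesis by simp
  qed
  moreover have "(\<Sum>i<m. uu B b d i * ?N $$ (i,k)) = [:0,1:] * uu B b d k - (\<Sum>i<m. [:B $$ (i,k):] * uu B b d i)"
  proof -
    have "(\<Sum>i<m. uu B b d i * ?N $$ (i,k)) = (\<Sum>i<m. (if i = k then [:0,1:] * uu B b d i else 0) - [:B $$ (i,k):] * uu B b d i)"
      using k by (intro sum.cong, auto simp: bN_index[OF z] bordered_index[OF B b z] algebra_simps)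
    also have "\<dots> = [:0,1:] * uu B b d k - (\<Sum>i<m. [:B $$ (i,k):] * uu B b d i)"
      using k by (simp add: sum_subtractf)
    finally show ?thesis .
  qed
  moreover have "?N $$ (m,k) = [:- (b $ k):]" using k by (simp add: bN_index[OF z] bordered_index[OF B b z])
  ultimately show ?thesis by (simp add: algebra_simps)
qed

lemma mvz: "transpose_mat B *\<^sub>v 0\<^sub>v m = 0\<^sub>v m"
  using B by (intro eq_vecI, auto simp: scalar_prod_def)

definition Wv :: "nat \<Rightarrow> complex vec" where
  "Wv j = vec m (\<lambda>k. coeff (uu B b d k) j)"

lemma Wv_carrier[simp]: "Wv j \<in> carrier_vec m" unfolding Wv_def by simp

lemma coeff_rec: assumes k: "k < m"
  shows "coeff (uu B b d k) j = (\<Sum>i<m. B $$ (i,k) * coeff (uu B b d i) (Suc j)) + b $ k * coeff (char_poly B) (Suc j)"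
    and "(\<Sum>i<m. B $$ (i,k) * coeff (uu B b d i) 0) + b $ k * coeff (char_poly B) 0 = 0"
proof -
  let ?p = "[:0,1:] * uu B b d k - (\<Sum>i<m. [:B $$ (i,k):] * uu B b d i) - [:b $ k:] * char_poly B"
  have "?p = 0" by (rule adj_identity[OF k])
  then have "coeff ?p (Suc j) = 0" "coeff ?p 0 = 0" by simp_all
  then show "coeff (uu B b d k) j = (\<Sum>i<m. B $$ (i,k) * coeff (uu B b d i) (Suc j)) + b $ k * coeff (char_poly B) (Suc j)"
    and "(\<Sum>i<m. B $$ (i,k) * coeff (uu B b d i) 0) + b $ k * coeff (char_poly B) 0 = 0"
    by (simp_all add: coeff_sum algebra_simps) (metis add.commute neg_eq_iff_add_eq_0)
qed

lemma BT_Wv: assumes k: "k < m"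
  shows "(transpose_mat B *\<^sub>v Wv j) $ k = (\<Sum>i<m. B $$ (i,k) * coeff (uu B b d i) j)"
proof -
  have "(transpose_mat B *\<^sub>v Wv j) $ k = row (transpose_mat B) k \<bullet> Wv j" using B k by simp
  also have "\<dots> = (\<Sum>i\<in>{0..<m}. row (transpose_mat B) k $ i * Wv j $ i)" by (simp add: scalar_prod_def Wv_def)
  also have "\<dots> = (\<Sum>i<m. B $$ (i,k) * coeff (uu B b d i) j)"
    unfolding lessThan_atLeast0 using B k by (intro sum.cong refl, simp add: Wv_def)
  finally show ?thesis .
qed

lemma Wv_rec: "Wv j = transpose_mat B *\<^sub>v Wv (Suc j) + coeff (char_poly B) (Suc j) \<cdot>\<^sub>v b"
proof (rule eq_vecI)
  fix k assume "k < dim_vec (transpose_mat B *\<^sub>v Wv (Suc j) + coeff (char_poly B) (Suc j) \<cdot>\<^sub>v b)"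
  then have k: "k < m" using B b by simp
  have "(transpose_mat B *\<^sub>v Wv (Suc j) + coeff (char_poly B) (Suc j) \<cdot>\<^sub>v b) $ k
     = (transpose_mat B *\<^sub>v Wv (Suc j)) $ k + coeff (char_poly B) (Suc j) * b $ k"
    using B b k by simp
  also have "\<dots> = coeff (uu B b d k) j"
    unfolding BT_Wv[OF k] coeff_rec(1)[OF k, of j] by (simp only: mult.commute[of "b $ k"])
  also have "\<dots> = Wv j $ k" using k by (simp add: Wv_def)
  finally show "Wv j $ k = (transpose_mat B *\<^sub>v Wv (Suc j) + coeff (char_poly B) (Suc j) \<cdot>\<^sub>v b) $ k" by simp
qed (use B b in simp)

lemma Wv_rec0: "transpose_mat B *\<^sub>v Wv 0 + coeff (char_poly B) 0 \<cdot>\<^sub>v b = 0\<^sub>v m"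
proof (rule eq_vecI)
  fix k assume "k < dim_vec (0\<^sub>v m :: complex vec)"
  then have k: "k < m" by simp
  have "(transpose_mat B *\<^sub>v Wv 0 + coeff (char_poly B) 0 \<cdot>\<^sub>v b) $ k
     = (transpose_mat B *\<^sub>v Wv 0) $ k + coeff (char_poly B) 0 * b $ k"
    using B b k by simp
  also have "\<dots> = 0"
    unfolding BT_Wv[OF k] using coeff_rec(2)[OF k] by (simp only: mult.commute[of "b $ k"])
  finally show "(transpose_mat B *\<^sub>v Wv 0 + coeff (char_poly B) 0 \<cdot>\<^sub>v b) $ k = 0\<^sub>v m $ k" using k by simp
qed (use B b in simp)

lemma Wv_high: assumes j: "m \<le> j" shows "Wv j = 0\<^sub>v m"
proof -
  define N where "N = max m (Suc (\<Sum>k<m. degree (uu B b d k)))"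
  have big: "Wv n = 0\<^sub>v m" if "N \<le> n" for n
  proof (intro eq_vecI)
    fix k assume "k < dim_vec (0\<^sub>v m :: complex vec)"
    then have k: "k < m" by simp
    have "degree (uu B b d k) \<le> (\<Sum>k<m. degree (uu B b d k))"
      by (rule member_le_sum, insert k, auto)
    then have "coeff (uu B b d k) n = 0" using that unfolding N_def by (intro coeff_eq_0, auto)
    then show "Wv n $ k = 0\<^sub>v m $ k" using k by (simp add: Wv_def)
  qed simp
  have dchi: "degree (char_poly B) = m" using degree_monic_char_poly[OF B] by simp
  show ?thesis
  proof (cases "N \<le> j")
    case True then show ?thesis by (rule big)
  next
    case False
    then have "j \<le> N" by simp
    then show ?thesis
    proof (induction j rule: inc_induct)
      case base then show ?case by (rule big, simp)
    next
      case (step n)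
      have "coeff (char_poly B) (Suc n) = 0" by (rule coeff_eq_0, insert dchi step j, simp)
      then show ?case using Wv_rec[of n] step(3) B b mvz by (simp, intro eq_vecI, auto)
    qed
  qed
qed

lemma Wv_top: assumes m: "0 < m" shows "Wv (m - 1) = b"
proof -
  have "coeff (char_poly B) m = 1" using degree_monic_char_poly[OF B] by simp
  then show ?thesis using Wv_rec[of "m - 1"] Wv_high[of m] m B b mvz by simp
qed

lemma dot_rec: assumes v: "v \<in> carrier_vec m"
  shows "v \<bullet> Wv j = (B *\<^sub>v v) \<bullet> Wv (Suc j) + coeff (char_poly B) (Suc j) * (v \<bullet> b)"
    and "(B *\<^sub>v v) \<bullet> Wv 0 + coeff (char_poly B) 0 * (v \<bullet> b) = 0"
proof -
  have tr: "v \<bullet> (transpose_mat B *\<^sub>v w) = (B *\<^sub>v v) \<bullet> w" if w: "w \<in> carrier_vec m" for w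
  proof -
    have "v \<bullet> (transpose_mat B *\<^sub>v w) = (transpose_mat B *\<^sub>v w) \<bullet> v"
      by (rule comm_scalar_prod[of _ m], insert B w v, auto)
    also have "\<dots> = w \<bullet> (B *\<^sub>v v)" by (rule transpose_vec_mult_scalar[OF B v w])
    also have "\<dots> = (B *\<^sub>v v) \<bullet> w" by (rule comm_scalar_prod[of _ m], insert B w v, auto)
    finally show ?thesis .
  qed
  have "v \<bullet> Wv j = v \<bullet> (transpose_mat B *\<^sub>v Wv (Suc j)) + v \<bullet> (coeff (char_poly B) (Suc j) \<cdot>\<^sub>v b)"
    by (subst Wv_rec, rule scalar_prod_add_distrib[of _ m], insert v B b, auto)
  then show "v \<bullet> Wv j = (B *\<^sub>v v) \<bullet> Wv (Suc j) + coeff (char_poly B) (Suc j) * (v \<bullet> b)"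
    using tr[of "Wv (Suc j)"] v b by simp
  have "0 = v \<bullet> (transpose_mat B *\<^sub>v Wv 0 + coeff (char_poly B) 0 \<cdot>\<^sub>v b)"
    using Wv_rec0 v by simp
  also have "\<dots> = v \<bullet> (transpose_mat B *\<^sub>v Wv 0) + v \<bullet> (coeff (char_poly B) 0 \<cdot>\<^sub>v b)"
    by (rule scalar_prod_add_distrib[of _ m], insert v B b, auto)
  finally show "(B *\<^sub>v v) \<bullet> Wv 0 + coeff (char_poly B) 0 * (v \<bullet> b) = 0"
    using tr[of "Wv 0"] v b by simp
qed

lemma Z_closed: assumes v: "v \<in> carrier_vec m" and Z: "\<forall>j. v \<bullet> Wv j = 0"
  shows "v \<bullet> b = 0" and "\<forall>j. (B *\<^sub>v v) \<bullet> Wv j = 0"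
proof -
  show vb: "v \<bullet> b = 0"
  proof (cases "m = 0")
    case True then show ?thesis using v b by (simp add: scalar_prod_def)
  next
    case False
    then have "Wv (m - 1) = b" by (intro Wv_top) simp
    then show ?thesis using Z[rule_format, of "m - 1"] by simp
  qed
  show "\<forall>j. (B *\<^sub>v v) \<bullet> Wv j = 0"
  proof
    fix j show "(B *\<^sub>v v) \<bullet> Wv j = 0"
    proof (cases j)
      case 0 then show ?thesis using dot_rec(2)[OF v] vb by simp
    next
      case (Suc i) then show ?thesis using dot_rec(1)[OF v, of i] vb Z by simp
    qed
  qed
qed

lemma pow_mult_vec: assumes v: "v \<in> carrier_vec m"
  shows "(B ^\<^sub>m Suc k) *\<^sub>v v = (B ^\<^sub>m k) *\<^sub>v (B *\<^sub>v v)"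
  using B v by (simp add: assoc_mult_mat_vec[of _ m m _ m])

lemma Z_imp: assumes v: "v \<in> carrier_vec m" and Z: "\<forall>j. v \<bullet> Wv j = 0"
  shows "b \<bullet> ((B ^\<^sub>m k) *\<^sub>v v) = 0"
  using v Z
proof (induction k arbitrary: v)
  case 0
  then have "v \<bullet> b = 0" by (intro Z_closed(1))
  then show ?case using 0 b B by (simp add: comm_scalar_prod[of b m v])
next
  case (Suc k)
  have "b \<bullet> ((B ^\<^sub>m k) *\<^sub>v (B *\<^sub>v v)) = 0"
  proof (rule Suc.IH)
    show "B *\<^sub>v v \<in> carrier_vec m" using Suc.prems(1) B by simp
    show "\<forall>j. (B *\<^sub>v v) \<bullet> Wv j = 0" by (rule Z_closed(2)[OF Suc.prems])
  qed
  then show ?case using pow_mult_vec[OF Suc.prems(1)] by simp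
qed

lemma imp_Z: assumes v: "v \<in> carrier_vec m" and K: "\<forall>k<m. b \<bullet> ((B ^\<^sub>m k) *\<^sub>v v) = 0"
  shows "v \<bullet> Wv j = 0"
proof -
  have main: "\<forall>v \<in> carrier_vec m. (\<forall>k. k < m - n \<longrightarrow> b \<bullet> ((B ^\<^sub>m k) *\<^sub>v v) = 0) \<longrightarrow> v \<bullet> Wv n = 0" for n
  proof (cases "m \<le> n")
    case True then show ?thesis using Wv_high by simp
  next
    case False
    then have "n \<le> m" by simp
    then show ?thesis
    proof (induction n rule: inc_induct)
      case base then show ?case using Wv_high by simp
    next
      case (step n)
      show ?case
      proof (intro ballI impI)
        fix v :: "complex vec" assume v: "v \<in> carrier_vec m"
          and H: "\<forall>k. k < m - n \<longrightarrow> b \<bullet> ((B ^\<^sub>m k) *\<^sub>v v) = 0"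
        have Bv: "B *\<^sub>v v \<in> carrier_vec m" using B v by simp
        have "(B *\<^sub>v v) \<bullet> Wv (Suc n) = 0"
        proof -
          have HB: "\<forall>k. k < m - Suc n \<longrightarrow> b \<bullet> ((B ^\<^sub>m k) *\<^sub>v (B *\<^sub>v v)) = 0"
          proof (intro allI impI)
            fix k assume "k < m - Suc n"
            then have "Suc k < m - n" by simp
            then have "b \<bullet> ((B ^\<^sub>m Suc k) *\<^sub>v v) = 0" using H by blast
            then show "b \<bullet> ((B ^\<^sub>m k) *\<^sub>v (B *\<^sub>v v)) = 0" by (simp only: pow_mult_vec[OF v, of k])
          qed
          show ?thesis by (rule step(3)[THEN bspec, OF Bv, THEN mp, OF HB])
        qed
        moreover have "v \<bullet> b = 0"
        proof -
          have "0 < m - n" using step(2) by simp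
          then have "b \<bullet> ((B ^\<^sub>m 0) *\<^sub>v v) = 0" using H by blast
          then show ?thesis using v b B by (simp add: comm_scalar_prod[of b m v])
        qed
        ultimately show "v \<bullet> Wv n = 0" using dot_rec(1)[OF v, of n] by simp
      qed
    qed
  qed
  have "\<forall>k. k < m - j \<longrightarrow> b \<bullet> ((B ^\<^sub>m k) *\<^sub>v v) = 0" using K by simp
  then show ?thesis using main[of j] v by blast
qed

lemma cp_eq: assumes c: "c \<in> carrier_vec m" and c': "c' \<in> carrier_vec m"
  shows "char_poly (bordered_mat B b c' d) = char_poly (bordered_mat B b c d) \<longleftrightarrow> (\<forall>j. (c - c') \<bullet> Wv j = 0)"
proof -
  have "char_poly (bordered_mat B b c' d) = char_poly (bordered_mat B b c d) \<longleftrightarrow>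
     (\<Sum>i<m. [:- (c' $ i):] * uu B b d i) = (\<Sum>i<m. [:- (c $ i):] * uu B b d i)"
    unfolding laplace_bordered[OF c] laplace_bordered[OF c'] by simp
  also have "\<dots> \<longleftrightarrow> (\<forall>j. (\<Sum>i<m. - (c' $ i) * coeff (uu B b d i) j) = (\<Sum>i<m. - (c $ i) * coeff (uu B b d i) j))"
    unfolding poly_eq_iff by (simp add: coeff_sum)
  also have "\<dots> \<longleftrightarrow> (\<forall>j. (c - c') \<bullet> Wv j = 0)"
  proof -
    have "(c - c') \<bullet> Wv j = (\<Sum>i<m. - (c' $ i) * coeff (uu B b d i) j) - (\<Sum>i<m. - (c $ i) * coeff (uu B b d i) j)" for j
      using c c' by (simp add: scalar_prod_def Wv_def lessThan_atLeast0 sum_subtractf[symmetric] algebra_simps)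
    then show ?thesis by simp
  qed
  finally show ?thesis .
qed

lemma krylov_char: assumes v: "v \<in> carrier_vec m"
  shows "transpose_mat (krylov_mat (transpose_mat B) b) *\<^sub>v v = 0\<^sub>v m \<longleftrightarrow> (\<forall>k<m. b \<bullet> ((B ^\<^sub>m k) *\<^sub>v v) = 0)"
proof -
  let ?K = "krylov_mat (transpose_mat B) b"
  have BT: "transpose_mat B \<in> carrier_mat m m" using B by simp
  have dB: "dim_row (transpose_mat B) = m" using B by simp
  have dK: "dim_row ?K = m" "dim_col ?K = m" unfolding krylov_mat_def dB by simp_all
  have colK: "col ?K k = (transpose_mat B ^\<^sub>m k) *\<^sub>v b" if "k < m" for k
  proof -
    have c: "(transpose_mat B ^\<^sub>m k) *\<^sub>v b \<in> carrier_vec m"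
      by (rule mult_mat_vec_carrier[OF pow_carrier_mat[OF BT] b])
    have "col ?K k = map (\<lambda>k. (transpose_mat B ^\<^sub>m k) *\<^sub>v b) [0..<m] ! k"
      unfolding krylov_mat_def dB by (rule col_mat_of_cols, use that c in simp_all)
    then show ?thesis using that by simp
  qed
  have e: "(transpose_mat (krylov_mat (transpose_mat B) b) *\<^sub>v v) $ k = b \<bullet> ((B ^\<^sub>m k) *\<^sub>v v)" if k: "k < m" for k
  proof -
    have 1: "(transpose_mat ?K *\<^sub>v v) $ k = row (transpose_mat ?K) k \<bullet> v"
      using k dK by (simp only: index_mult_mat_vec index_transpose_mat(2))
    have 2: "row (transpose_mat ?K) k = (transpose_mat B ^\<^sub>m k) *\<^sub>v b"
      using k dK colK[OF k] by (simp only: row_transpose)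
    have 3: "transpose_mat B ^\<^sub>m k = transpose_mat (B ^\<^sub>m k)" by (rule transpose_pow[OF B, symmetric])
    have "(transpose_mat ?K *\<^sub>v v) $ k = (transpose_mat (B ^\<^sub>m k) *\<^sub>v b) \<bullet> v"
      unfolding 1 2 3 ..
    also have "\<dots> = b \<bullet> ((B ^\<^sub>m k) *\<^sub>v v)" by (rule transpose_vec_mult_scalar[OF pow_carrier_mat[OF B] v b])
    finally show ?thesis .
  qed
  show ?thesis
  proof
    assume "transpose_mat ?K *\<^sub>v v = 0\<^sub>v m"
    note z = this
    show "\<forall>k<m. b \<bullet> ((B ^\<^sub>m k) *\<^sub>v v) = 0"
    proof (intro allI impI)
      fix k assume k: "k < m"
      have "(transpose_mat ?K *\<^sub>v v) $ k = 0" unfolding z using k by simp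
      then show "b \<bullet> ((B ^\<^sub>m k) *\<^sub>v v) = 0" unfolding e[OF k] .
    qed
  next
    assume "\<forall>k<m. b \<bullet> ((B ^\<^sub>m k) *\<^sub>v v) = 0"
    note z = this
    show "transpose_mat ?K *\<^sub>v v = 0\<^sub>v m"
    proof (rule eq_vecI)
      fix k assume "k < dim_vec (0\<^sub>v m :: complex vec)"
      then have k: "k < m" by simp
      show "(transpose_mat ?K *\<^sub>v v) $ k = 0\<^sub>v m $ k" unfolding e[OF k] using z k by simp
    qed (use dK in simp)
  qed
qed

lemma main_gen: assumes c: "c \<in> carrier_vec m"
  shows "(\<forall>c' \<in> carrier_vec m. char_poly (bordered_mat B b c' d) = char_poly (bordered_mat B b c d) \<longrightarrow> c' = c)
     \<longleftrightarrow> observable B b"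
proof -
  let ?K = "krylov_mat (transpose_mat B) b"
  have K: "?K \<in> carrier_mat m m" using B unfolding krylov_mat_def by auto
  have KT: "transpose_mat ?K \<in> carrier_mat m m" using K by simp
  have "observable B b \<longleftrightarrow> det ?K \<noteq> 0"
    unfolding observable_def using B vec_space.det_rank_iff[OF K] by simp
  also have "\<dots> \<longleftrightarrow> det (transpose_mat ?K) \<noteq> 0" using det_transpose[OF K] by simp
  also have "\<dots> \<longleftrightarrow> (\<forall>v \<in> carrier_vec m. transpose_mat ?K *\<^sub>v v = 0\<^sub>v m \<longrightarrow> v = 0\<^sub>v m)"
    using det_0_iff_vec_prod_zero_field[OF KT] by blast
  also have "\<dots> \<longleftrightarrow> (\<forall>v \<in> carrier_vec m. (\<forall>j. v \<bullet> Wv j = 0) \<longrightarrow> v = 0\<^sub>v m)"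
  proof -
    have eqv: "transpose_mat ?K *\<^sub>v v = 0\<^sub>v m \<longleftrightarrow> (\<forall>j. v \<bullet> Wv j = 0)" if v: "v \<in> carrier_vec m" for v
    proof
      assume "transpose_mat ?K *\<^sub>v v = 0\<^sub>v m"
      then have "\<forall>k<m. b \<bullet> ((B ^\<^sub>m k) *\<^sub>v v) = 0" using krylov_char[OF v] by simp
      then show "\<forall>j. v \<bullet> Wv j = 0" using imp_Z[OF v] by simp
    next
      assume "\<forall>j. v \<bullet> Wv j = 0"
      then have "\<forall>k<m. b \<bullet> ((B ^\<^sub>m k) *\<^sub>v v) = 0" using Z_imp[OF v] by simp
      then show "transpose_mat ?K *\<^sub>v v = 0\<^sub>v m" using krylov_char[OF v] by simp
    qed
    show ?thesis using eqv by blast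
  qed
  also have "\<dots> \<longleftrightarrow> (\<forall>c' \<in> carrier_vec m. char_poly (bordered_mat B b c' d) = char_poly (bordered_mat B b c d) \<longrightarrow> c' = c)"
  proof
    assume H: "\<forall>v \<in> carrier_vec m. (\<forall>j. v \<bullet> Wv j = 0) \<longrightarrow> v = 0\<^sub>v m"
    show "\<forall>c' \<in> carrier_vec m. char_poly (bordered_mat B b c' d) = char_poly (bordered_mat B b c d) \<longrightarrow> c' = c"
    proof (intro ballI impI)
      fix c' :: "complex vec" assume c': "c' \<in> carrier_vec m"
        and e: "char_poly (bordered_mat B b c' d) = char_poly (bordered_mat B b c d)"
      then have "c - c' = 0\<^sub>v m" using H cp_eq[OF c c'] c by simp
      then show "c' = c" using c c' by (rule vec_diff_zero)
    qed
  next
    assume H: "\<forall>c' \<in> carrier_vec m. char_poly (bordered_mat B b c' d) = char_poly (bordered_mat B b c d) \<longrightarrow> c' = c"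
    show "\<forall>v \<in> carrier_vec m. (\<forall>j. v \<bullet> Wv j = 0) \<longrightarrow> v = 0\<^sub>v m"
    proof (intro ballI impI)
      fix v :: "complex vec" assume v: "v \<in> carrier_vec m" and Z: "\<forall>j. v \<bullet> Wv j = 0"
      have cv: "c - v \<in> carrier_vec m" using c v by simp
      have eq: "c - (c - v) = v" using c v by (intro eq_vecI, auto)
      have "c - v = c" using H cp_eq[OF c cv] Z eq cv by simp
      show "v = 0\<^sub>v m"
      proof (rule eq_vecI)
        fix i assume i: "i < dim_vec (0\<^sub>v m :: complex vec)"
        then have "(c - v) $ i = c $ i" using \<open>c - v = c\<close> by simp
        then show "v $ i = 0\<^sub>v m $ i" using c v i by simp
      qed (use v in simp)
    qed
  qed
  finally show ?thesis by simp
qed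

end
theorem mainTheorem5:
  fixes m :: nat and B :: "complex mat" and lam :: "nat \<Rightarrow> complex" and b c :: "complex vec"
  defines "P \<equiv> (\<Prod>i<m+1. [:- lam i, 1:])"
      and "\<delta> \<equiv> (\<Sum>i<m+1. lam i) - mat_trace B"
  assumes B: "B \<in> carrier_mat m m"
      and b: "b \<in> carrier_vec m" and c: "c \<in> carrier_vec m"
      and cp: "char_poly (bordered_mat B b c \<delta>) = P"
  shows "((\<forall>c' \<in> carrier_vec m. char_poly (bordered_mat B b c' \<delta>) = P \<longrightarrow> c' = c)
            \<longleftrightarrow> observable B b)
       \<and> ((\<forall>b' \<in> carrier_vec m. char_poly (bordered_mat B b' c \<delta>) = P \<longrightarrow> b' = b)
            \<longleftrightarrow> controllable B c)"
proof
  show "(\<forall>c' \<in> carrier_vec m. char_poly (bordered_mat B b c' \<delta>) = P \<longrightarrow> c' = c) \<longleftrightarrow> observable B b"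
    using main_gen[OF B b c, of \<delta>] cp by simp
next
  have BT: "transpose_mat B \<in> carrier_mat m m" using B by simp
  have tr: "transpose_mat (bordered_mat B b' c \<delta>) = bordered_mat (transpose_mat B) c b' \<delta>"
    if b': "b' \<in> carrier_vec m" for b'
  proof -
    have C1: "bordered_mat B b' c \<delta> \<in> carrier_mat (Suc m) (Suc m)" by (rule bordered_carrier[OF B b' c])
    have C2: "bordered_mat (transpose_mat B) c b' \<delta> \<in> carrier_mat (Suc m) (Suc m)" by (rule bordered_carrier[OF BT c b'])
    show ?thesis
    proof (rule eq_matI)
      fix i j assume "i < dim_row (bordered_mat (transpose_mat B) c b' \<delta>)" "j < dim_col (bordered_mat (transpose_mat B) c b' \<delta>)"
      then have i: "i < Suc m" and j: "j < Suc m" using C2 by auto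
      have "transpose_mat (bordered_mat B b' c \<delta>) $$ (i, j) = bordered_mat B b' c \<delta> $$ (j, i)"
        using C1 i j by simp
      also have "\<dots> = bordered_mat (transpose_mat B) c b' \<delta> $$ (i, j)"
        unfolding bordered_index[OF B b' c j i] bordered_index[OF BT c b' i j] using B i j by auto
      finally show "transpose_mat (bordered_mat B b' c \<delta>) $$ (i, j) = bordered_mat (transpose_mat B) c b' \<delta> $$ (i, j)" .
    qed (use C1 C2 in auto)
  qed
  have cpT: "char_poly (bordered_mat B b' c \<delta>) = char_poly (bordered_mat (transpose_mat B) c b' \<delta>)"
    if b': "b' \<in> carrier_vec m" for b'
    using char_poly_transpose_mat[OF bordered_carrier[OF B b' c, of \<delta>]] tr[OF b'] by simp
  have ctrl: "controllable B c \<longleftrightarrow> observable (transpose_mat B) c"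
    unfolding controllable_def observable_def using B by simp
  show "(\<forall>b' \<in> carrier_vec m. char_poly (bordered_mat B b' c \<delta>) = P \<longrightarrow> b' = b) \<longleftrightarrow> controllable B c"
    using main_gen[OF BT c b, of \<delta>] cp cpT b unfolding ctrl by auto
qed

end
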